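(* Let $\mathcal A\in\mathbb C^{n_1\times n_1\times n_3}$ with $\mathrm{ind}(\mathcal A)=k$, let $\mathcal A^-$ be a fixed element of $\mathcal A\{1\}$, and let $\mathcal X\in\mathbb C^{n_1\times n_1\times n_3}$. The following are equivalent: (a) $\mathcal X=\mathcal A^{-,D}$; (b) $\mathcal X\mathcal A\mathcal X=\mathcal X$, $\mathcal X\mathcal A^k=\mathcal A^-\mathcal A^k$, $\mathcal A\mathcal X\mathcal A=\mathcal A\mathcal A^D\mathcal A$ and $\mathcal A\mathcal X=\mathcal A\mathcal A^D$; (c) $\mathcal A^-\mathcal A\mathcal X=\mathcal X$, $\mathcal X\mathcal A^k=\mathcal A^-\mathcal A^k$ and $\mathcal X=\mathcal X\mathcal A\mathcal A^D$; (d) $\mathcal A^-\mathcal A\mathcal X\mathcal A\mathcal A^D=\mathcal X$ and $\mathcal A\mathcal X\mathcal A^k=\mathcal A^k$; (e) $\mathcal A^-\mathcal A\mathcal A^D\mathcal A=\mathcal X\mathcal A$, $\mathcal A^k\mathcal X=\mathcal A^k\mathcal A^D$ and $\mathcal X=\mathcal X\mathcal A\mathcal A^D$.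
   Context: Fix a nonsingular matrix $M\in\mathbb C^{n_3\times n_3}$. For $\mathcal C\in\mathbb C^{n_1\times n_2\times n_3}$ let $\widehat{\mathcal C}=\mathcal C\times_3M$, i.e. $\widehat{\mathcal C}_{ijk}=\sum_{l=1}^{n_3}M_{kl}\mathcal C_{ijl}$, and let $\widehat{\mathcal C}^{(i)}$ denote its $i$-th frontal slice. The M-product $\mathcal C\star_M\mathcal D$ of $\mathcal C\in\mathbb C^{n_1\times n_2\times n_3}$ and $\mathcal D\in\mathbb C^{n_2\times l\times n_3}$ is the unique tensor with $\widehat{\mathcal C\star_M\mathcal D}^{(i)}=\widehat{\mathcal C}^{(i)}\widehat{\mathcal D}^{(i)}$ for all $i\in[n_3]$. Juxtaposition of tensors denotes the M-product; powers are M-product powers with $\mathcal A^0=\mathcal I$ where $\widehat{\mathcal I}^{(i)}=I_{n_1}$. $\mathcal A\{1\}$ is the set of all $\mathcal W$ with $\mathcal A\mathcal W\mathcal A=\mathcal A$. The index $\mathrm{ind}(\mathcal A)$ is $\max_{i}\mathrm{ind}(\widehat{\mathcal A}^{(i)})$, where the index of a square matrix $B$ is the least $k\ge0$ with $\mathrm{rank}(B^{k+1})=\mathrm{rank}(B^k)$. For $\mathrm{ind}(\mathcal A)=k$, the Drazin inverse $\mathcal A^D$ is the unique $\mathcal W$ with $\mathcal W\mathcal A^{k+1}=\mathcal A^k$, $\mathcal W\mathcal A\mathcal W=\mathcal W$, $\mathcal A\mathcal W=\mathcal W\mathcal A$. The 1-D inverse is $\mathcal A^{-,D}=\mathcal A^-\mathcal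 A\mathcal A^D$. *)

theory Defs
  imports "HOL-Analysis.Analysis"
begin

text \<open>A third-order tensor C in C^(n1 x n1 x n3) is represented by its frontal slices:
  C $ k $ i $ j is the entry C_{ijk}; the index types 'n (size n1) and 'm (size n3) are finite.\<close>

type_synonym ('n, 'm) tensor = "complex ^ 'n ^ 'n ^ 'm"

definition mode3 :: "complex ^ 'm ^ 'm \<Rightarrow> ('n::finite, 'm::finite) tensor \<Rightarrow> ('n, 'm) tensor" where
  "mode3 M C = (\<chi> k i j. \<Sum>l\<in>UNIV. M $ k $ l * C $ l $ i $ j)"

text \<open>M-product: the tensor whose transformed slices are the products of the transformed slices
  (for nonsingular M this is the unique such tensor).\<close>
definition mprod :: "complex ^ 'm ^ 'm \<Rightarrow> ('n::finite, 'm::finite) tensor \<Rightarrow> ('n, 'm) tensor \<Rightarrow> ('n, 'm) tensor" where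
  "mprod M C D = mode3 (matrix_inv M) (\<chi> k. mode3 M C $ k ** mode3 M D $ k)"

definition tid :: "complex ^ 'm ^ 'm \<Rightarrow> ('n::finite, 'm::finite) tensor" where
  "tid M = mode3 (matrix_inv M) (\<chi> k. mat 1)"

primrec tpow :: "complex ^ 'm ^ 'm \<Rightarrow> ('n::finite, 'm::finite) tensor \<Rightarrow> nat \<Rightarrow> ('n, 'm) tensor" where
  "tpow M A 0 = tid M"
| "tpow M A (Suc j) = mprod M (tpow M A j) A"

definition mpow :: "'a::semiring_1 ^ 'n ^ 'n \<Rightarrow> nat \<Rightarrow> 'a ^ 'n ^ 'n" where
  "mpow B k = ((\<lambda>X. X ** B) ^^ k) (mat 1)"

definition mat_index :: "complex ^ 'n ^ 'n \<Rightarrow> nat" where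
  "mat_index B = (LEAST k. rank (mpow B (k + 1)) = rank (mpow B k))"

definition tind :: "complex ^ 'm ^ 'm \<Rightarrow> ('n::finite, 'm::finite) tensor \<Rightarrow> nat" where
  "tind M A = Max (range (\<lambda>i. mat_index (mode3 M A $ i)))"

definition one_inverses :: "complex ^ 'm ^ 'm \<Rightarrow> ('n::finite, 'm::finite) tensor \<Rightarrow> ('n, 'm) tensor set" where
  "one_inverses M A = {W. mprod M (mprod M A W) A = A}"

definition drazin :: "complex ^ 'm ^ 'm \<Rightarrow> ('n::finite, 'm::finite) tensor \<Rightarrow> ('n, 'm) tensor" where
  "drazin M A = (THE W. mprod M W (tpow M A (tind M A + 1)) = tpow M A (tind M A)
                      \<and> mprod M (mprod M W A) W = W \<and> mprod M A W = mprod M W A)"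

definition one_D_inverse :: "complex ^ 'm ^ 'm \<Rightarrow> ('n::finite, 'm::finite) tensor \<Rightarrow> ('n, 'm) tensor \<Rightarrow> ('n, 'm) tensor" where
  "one_D_inverse M A Am = mprod M (mprod M Am A) (drazin M A)"

end

theory Submission
  imports Defs
begin


locale amon =
  fixes mul :: "'a \<Rightarrow> 'a \<Rightarrow> 'a" (infixl "\<cdot>" 70) and e :: 'a
  assumes assoc: "(a \<cdot> b) \<cdot> c = a \<cdot> (b \<cdot> c)" and lid: "e \<cdot> a = a" and rid: "a \<cdot> e = a"
begin

primrec pw where "pw a 0 = e" | "pw a (Suc n) = pw a n \<cdot> a"
declare pw.simps(2)[simp del]

lemma pw_add: "pw a (m + n) = pw a m \<cdot> pw a n"
  by (induct n) (simp_all add: rid assoc pw.simps(2))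

lemma pw1: "pw a (Suc 0) = a" by (simp add: lid pw.simps(2))

lemma pw_Suc': "pw a (Suc n) = a \<cdot> pw a n"
proof -
  have "pw a (Suc 0 + n) = pw a (Suc 0) \<cdot> pw a n" by (rule pw_add)
  then show ?thesis by (simp add: pw1)
qed

lemma comm_pw: "b \<cdot> a = a \<cdot> b \<Longrightarrow> b \<cdot> pw a n = pw a n \<cdot> b"
proof (induct n)
  case 0 then show ?case by (simp add: lid rid)
next
  case (Suc n)
  have "b \<cdot> pw a (Suc n) = (b \<cdot> pw a n) \<cdot> a" by (simp add: assoc pw.simps(2))
  also have "\<dots> = pw a n \<cdot> (b \<cdot> a)" using Suc by (simp add: assoc)
  also have "\<dots> = pw a (Suc n) \<cdot> b" using Suc.prems by (simp add: assoc pw.simps(2))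
  finally show ?case .
qed

lemma comm_pw2: "b \<cdot> a = a \<cdot> b \<Longrightarrow> pw b m \<cdot> pw a n = pw a n \<cdot> pw b m"
  by (metis comm_pw)

definition isD where
  "isD a k d \<longleftrightarrow> d \<cdot> pw a (Suc k) = pw a k \<and> d \<cdot> a \<cdot> d = d \<and> a \<cdot> d = d \<cdot> a"

lemma isD_pow1: assumes "isD a k d" shows "pw a j \<cdot> pw d (Suc j) = d"
proof (induct j)
  case 0 then show ?case by (simp add: lid pw1)
next
  case (Suc j)
  have c: "a \<cdot> d = d \<cdot> a" and dad: "d \<cdot> (a \<cdot> d) = d" using assms by (auto simp: isD_def assoc)
  have ca: "a \<cdot> pw d (Suc j) = pw d (Suc j) \<cdot> a" using comm_pw[OF c] by simp
  have "pw a (Suc j) \<cdot> pw d (Suc (Suc j)) = pw a j \<cdot> ((a \<cdot> pw d (Suc j)) \<cdot> d)"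
    by (simp add: assoc pw.simps(2))
  also have "\<dots> = pw a j \<cdot> ((pw d (Suc j) \<cdot> a) \<cdot> d)" by (simp only: ca)
  also have "\<dots> = pw a j \<cdot> pw d (Suc j)" by (simp add: assoc dad pw.simps(2))
  also have "\<dots> = d" by (rule Suc)
  finally show ?case .
qed

lemma isD_pow2: assumes "isD a k d" shows "pw d (Suc j) \<cdot> pw a j = d"
proof -
  have c: "a \<cdot> d = d \<cdot> a" using assms by (auto simp: isD_def)
  show ?thesis using isD_pow1[OF assms, of j] comm_pw2[OF c] by metis
qed

lemma isD_Ak: assumes "isD a k d" shows "pw a k = pw a (Suc k) \<cdot> d"
proof -
  have c: "d \<cdot> a = a \<cdot> d" and h: "d \<cdot> pw a (Suc k) = pw a k" using assms by (auto simp: isD_def)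
  show ?thesis using comm_pw[OF c, of "Suc k"] h by simp
qed

lemma isD_unique_aux: assumes "isD a k d1" "isD a k d2"
  shows "d1 = d1 \<cdot> a \<cdot> d2" "d1 = d2 \<cdot> a \<cdot> d1"
proof -
  have "d1 = pw d1 (Suc k) \<cdot> pw a k" using isD_pow2[OF assms(1)] by simp
  also have "\<dots> = pw d1 (Suc k) \<cdot> (pw a (Suc k) \<cdot> d2)" by (simp only: isD_Ak[OF assms(2), symmetric])
  also have "\<dots> = (pw d1 (Suc k) \<cdot> pw a k) \<cdot> a \<cdot> d2" by (simp add: assoc pw.simps(2))
  also have "\<dots> = d1 \<cdot> a \<cdot> d2" using isD_pow2[OF assms(1), of k] by simp
  finally show "d1 = d1 \<cdot> a \<cdot> d2" .
  have h2: "d2 \<cdot> pw a (Suc k) = pw a k" using assms(2) by (simp add: isD_def)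
  have "d1 = pw a k \<cdot> pw d1 (Suc k)" using isD_pow1[OF assms(1)] by simp
  also have "\<dots> = d2 \<cdot> pw a (Suc k) \<cdot> pw d1 (Suc k)" by (simp only: h2)
  also have "\<dots> = d2 \<cdot> a \<cdot> (pw a k \<cdot> pw d1 (Suc k))" by (simp add: pw_Suc' assoc)
  also have "\<dots> = d2 \<cdot> a \<cdot> d1" using isD_pow1[OF assms(1), of k] by simp
  finally show "d1 = d2 \<cdot> a \<cdot> d1" .
qed

lemma isD_unique: assumes "isD a k d1" "isD a k d2" shows "d1 = d2"
  using isD_unique_aux[OF assms] isD_unique_aux[OF assms(2,1)] by metis

lemma E1: assumes "pw a (Suc k) \<cdot> x = pw a k" shows "pw a (k + j) \<cdot> pw x j = pw a k"
proof (induct j)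
  case 0 then show ?case by (simp add: rid)
next
  case (Suc j)
  have s: "pw a (k + Suc j) = pw a j \<cdot> pw a (Suc k)" by (metis add.commute add_Suc_right pw_add)
  have s2: "pw a (k + j) = pw a j \<cdot> pw a k" by (metis add.commute pw_add)
  have "pw a (k + Suc j) \<cdot> pw x (Suc j) = pw a j \<cdot> (pw a (Suc k) \<cdot> x) \<cdot> pw x j"
    by (simp only: s pw_Suc'[of x] assoc)
  also have "\<dots> = pw a (k + j) \<cdot> pw x j" by (simp only: assms s2)
  finally show ?case using Suc by simp
qed

lemma E2: assumes "y \<cdot> pw a (Suc k) = pw a k" shows "pw y j \<cdot> pw a (k + j) = pw a k"
proof (induct j)
  case 0 then show ?case by (simp add: lid)
next
  case (Suc j)
  have s: "pw a (k + Suc j) = pw a (Suc k) \<cdot> pw a j" by (metis add_Suc_right add_Suc pw_add)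
  have s2: "pw a (k + j) = pw a k \<cdot> pw a j" by (metis pw_add)
  have "pw y (Suc j) \<cdot> pw a (k + Suc j) = pw y j \<cdot> ((y \<cdot> pw a (Suc k)) \<cdot> pw a j)"
    by (simp only: s pw.simps(2)[of y] assoc)
  also have "\<dots> = pw y j \<cdot> pw a (k + j)" by (simp only: assms s2)
  finally show ?case using Suc by simp
qed

lemma isD_exists:
  assumes x: "pw a (Suc k) \<cdot> x = pw a k" and y: "y \<cdot> pw a (Suc k) = pw a k"
  shows "isD a k (pw a k \<cdot> pw x (Suc k))"
proof -
  define D where "D = pw a k \<cdot> pw x (Suc k)"
  have e1: "pw a (k + j) \<cdot> pw x j = pw a k" for j using E1[OF x] .
  have e2: "pw y j \<cdot> pw a (k + j) = pw a k" for j using E2[OF y] .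
  have D2: "D = pw y (Suc k) \<cdot> pw a k"
  proof -
    have "D = (pw y (Suc k) \<cdot> pw a (k + Suc k)) \<cdot> pw x (Suc k)" unfolding D_def by (simp only: e2)
    also have "\<dots> = pw y (Suc k) \<cdot> (pw a (k + Suc k) \<cdot> pw x (Suc k))" by (simp only: assoc)
    also have "\<dots> = pw y (Suc k) \<cdot> pw a k" by (simp only: e1)
    finally show ?thesis .
  qed
  have AD: "a \<cdot> D = pw a k \<cdot> pw x k"
  proof -
    have "a \<cdot> D = (pw a (Suc k) \<cdot> x) \<cdot> pw x k" unfolding D_def by (simp only: pw_Suc' assoc)
    then show ?thesis by (simp only: x)
  qed
  have DA: "D \<cdot> a = pw y k \<cdot> pw a k"
  proof -
    have "D \<cdot> a = pw y k \<cdot> (y \<cdot> pw a (Suc k))" unfolding D2 by (simp only: pw.simps(2) assoc)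
    then show ?thesis by (simp only: y)
  qed
  have yx: "pw y k \<cdot> pw a k = pw a k \<cdot> pw x k"
  proof -
    have "pw y k \<cdot> pw a k = pw y k \<cdot> (pw a (k + k) \<cdot> pw x k)" by (simp only: e1)
    also have "\<dots> = (pw y k \<cdot> pw a (k + k)) \<cdot> pw x k" by (simp only: assoc)
    also have "\<dots> = pw a k \<cdot> pw x k" by (simp only: e2)
    finally show ?thesis .
  qed
  have 1: "D \<cdot> pw a (Suc k) = pw a k"
  proof -
    have "D \<cdot> pw a (Suc k) = pw y (Suc k) \<cdot> pw a (k + Suc k)" by (simp only: D2 assoc pw_add)
    then show ?thesis by (simp only: e2)
  qed
  have 2: "D \<cdot> a \<cdot> D = D"
  proof -
    have "D \<cdot> a \<cdot> D = D \<cdot> (a \<cdot> D)" by (simp only: assoc)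
    also have "\<dots> = D \<cdot> (pw a k \<cdot> pw x k)" by (simp only: AD)
    also have "\<dots> = pw y (Suc k) \<cdot> (pw a k \<cdot> (pw a k \<cdot> pw x k))" by (simp only: D2 assoc)
    also have "\<dots> = pw y (Suc k) \<cdot> (pw a (k + k) \<cdot> pw x k)"
      by (simp only: assoc pw_add)
    also have "\<dots> = D" by (simp only: e1 D2)
    finally show ?thesis .
  qed
  show ?thesis using 1 2 AD DA yx unfolding isD_def D_def[symmetric] by simp
qed

lemma main_alg:
  assumes D: "isD a k d" and G: "a \<cdot> g \<cdot> a = a"
  shows "(X = g \<cdot> a \<cdot> d \<longleftrightarrow> X \<cdot> a \<cdot> X = X \<and> X \<cdot> pw a k = g \<cdot> pw a k \<and> a \<cdot> X \<cdot> a = a \<cdot> d \<cdot> a \<and> a \<cdot> X = a \<cdot> d)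
       \<and> (X = g \<cdot> a \<cdot> d \<longleftrightarrow> g \<cdot> a \<cdot> X = X \<and> X \<cdot> pw a k = g \<cdot> pw a k \<and> X = X \<cdot> a \<cdot> d)
       \<and> (X = g \<cdot> a \<cdot> d \<longleftrightarrow> g \<cdot> a \<cdot> X \<cdot> a \<cdot> d = X \<and> a \<cdot> X \<cdot> pw a k = pw a k)
       \<and> (X = g \<cdot> a \<cdot> d \<longleftrightarrow> g \<cdot> a \<cdot> d \<cdot> a = X \<cdot> a \<and> pw a k \<cdot> X = pw a k \<cdot> d \<and> X = X \<cdot> a \<cdot> d)"
proof -
  define A where "A = pw a k"
  define D' where "D' = pw d (Suc k)"
  have c: "a \<cdot> d = d \<cdot> a" and dad0: "d \<cdot> a \<cdot> d = d" and dk: "d \<cdot> pw a (Suc k) = A"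
    using D by (auto simp: isD_def A_def)
  have aga: "a \<cdot> (g \<cdot> (a \<cdot> z)) = a \<cdot> z" "a \<cdot> (g \<cdot> a) = a" for z
    using G by (metis assoc)+
  have dad: "d \<cdot> (a \<cdot> (d \<cdot> z)) = d \<cdot> z" "d \<cdot> (a \<cdot> d) = d" for z
    using dad0 by (metis assoc)+
  have F3: "a \<cdot> (d \<cdot> (A \<cdot> z)) = A \<cdot> z" "a \<cdot> (d \<cdot> A) = A" for z
  proof -
    have "a \<cdot> (d \<cdot> A) = d \<cdot> pw a (Suc k)" by (simp add: c A_def pw_Suc' assoc[symmetric])
    then show "a \<cdot> (d \<cdot> A) = A" using dk by simp
    then show "a \<cdot> (d \<cdot> (A \<cdot> z)) = A \<cdot> z" for z by (metis assoc)
  qed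
  have F4: "A \<cdot> (d \<cdot> (a \<cdot> z)) = A \<cdot> z" "A \<cdot> (d \<cdot> a) = A" for z
  proof -
    have "A \<cdot> (d \<cdot> a) = d \<cdot> pw a (Suc k)"
      using comm_pw[of d a k] c by (simp add: A_def pw.simps(2) assoc[symmetric])
    then show "A \<cdot> (d \<cdot> a) = A" using dk by simp
    then show "A \<cdot> (d \<cdot> (a \<cdot> z)) = A \<cdot> z" for z by (metis assoc)
  qed
  have ad: "a \<cdot> d = A \<cdot> (D' \<cdot> a)"
    using isD_pow1[OF D, of k] c unfolding A_def D'_def by (metis assoc)
  have key: "X = g \<cdot> (a \<cdot> d)" if "X = X \<cdot> (a \<cdot> d)" "X \<cdot> A = g \<cdot> A" for X
  proof -
    have "X = (X \<cdot> A) \<cdot> (D' \<cdot> a)" using that(1) ad by (simp add: assoc)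
    also have "\<dots> = g \<cdot> (a \<cdot> d)" using that(2) ad by (simp add: assoc)
    finally show ?thesis .
  qed
  have Yprops: "(g \<cdot> (a \<cdot> d)) \<cdot> A = g \<cdot> A" "A \<cdot> (g \<cdot> (a \<cdot> d)) = A \<cdot> d"
  proof -
    show "(g \<cdot> (a \<cdot> d)) \<cdot> A = g \<cdot> A" using F3 by (simp add: assoc)
    have "A \<cdot> (g \<cdot> (a \<cdot> d)) = A \<cdot> (d \<cdot> (a \<cdot> (g \<cdot> (a \<cdot> d))))" using F4 by simp
    also have "\<dots> = A \<cdot> d" by (simp add: aga dad)
    finally show "A \<cdot> (g \<cdot> (a \<cdot> d)) = A \<cdot> d" .
  qed
  have b: "X = g \<cdot> a \<cdot> d \<longleftrightarrow> X \<cdot> a \<cdot> X = X \<and> X \<cdot> A = g \<cdot> A \<and> a \<cdot> X \<cdot> a = a \<cdot> d \<cdot> a \<and> a \<cdot> X = a \<cdot> d"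
  proof
    assume "X = g \<cdot> a \<cdot> d" then show "X \<cdot> a \<cdot> X = X \<and> X \<cdot> A = g \<cdot> A \<and> a \<cdot> X \<cdot> a = a \<cdot> d \<cdot> a \<and> a \<cdot> X = a \<cdot> d"
      using Yprops by (simp add: assoc aga dad)
  next
    assume h: "X \<cdot> a \<cdot> X = X \<and> X \<cdot> A = g \<cdot> A \<and> a \<cdot> X \<cdot> a = a \<cdot> d \<cdot> a \<and> a \<cdot> X = a \<cdot> d"
    then have "X = X \<cdot> (a \<cdot> d)" by (metis assoc)
    then show "X = g \<cdot> a \<cdot> d" using key h by (simp add: assoc)
  qed
  have cc: "X = g \<cdot> a \<cdot> d \<longleftrightarrow> g \<cdot> a \<cdot> X = X \<and> X \<cdot> A = g \<cdot> A \<and> X = X \<cdot> a \<cdot> d"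
  proof
    assume "X = g \<cdot> a \<cdot> d" then show "g \<cdot> a \<cdot> X = X \<and> X \<cdot> A = g \<cdot> A \<and> X = X \<cdot> a \<cdot> d"
      using Yprops by (simp add: assoc aga dad)
  next
    assume h: "g \<cdot> a \<cdot> X = X \<and> X \<cdot> A = g \<cdot> A \<and> X = X \<cdot> a \<cdot> d"
    then show "X = g \<cdot> a \<cdot> d" using key[of X] by (simp add: assoc)
  qed
  have dd: "X = g \<cdot> a \<cdot> d \<longleftrightarrow> g \<cdot> a \<cdot> X \<cdot> a \<cdot> d = X \<and> a \<cdot> X \<cdot> A = A"
  proof
    assume "X = g \<cdot> a \<cdot> d" then show "g \<cdot> a \<cdot> X \<cdot> a \<cdot> d = X \<and> a \<cdot> X \<cdot> A = A"
      using F3 by (simp add: assoc aga dad)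
  next
    assume h: "g \<cdot> a \<cdot> X \<cdot> a \<cdot> d = X \<and> a \<cdot> X \<cdot> A = A"
    have "X = g \<cdot> (a \<cdot> (X \<cdot> (a \<cdot> d)))" using h by (simp add: assoc)
    also have "\<dots> = g \<cdot> ((a \<cdot> X \<cdot> A) \<cdot> (D' \<cdot> a))" by (simp add: ad assoc)
    also have "\<dots> = g \<cdot> a \<cdot> d" using h ad by (simp add: assoc)
    finally show "X = g \<cdot> a \<cdot> d" .
  qed
  have ee: "X = g \<cdot> a \<cdot> d \<longleftrightarrow> g \<cdot> a \<cdot> d \<cdot> a = X \<cdot> a \<and> A \<cdot> X = A \<cdot> d \<and> X = X \<cdot> a \<cdot> d"
  proof
    assume "X = g \<cdot> a \<cdot> d" then show "g \<cdot> a \<cdot> d \<cdot> a = X \<cdot> a \<and> A \<cdot> X = A \<cdot> d \<and> X = X \<cdot> a \<cdot> d"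
      using Yprops by (simp add: assoc aga dad)
  next
    assume h: "g \<cdot> a \<cdot> d \<cdot> a = X \<cdot> a \<and> A \<cdot> X = A \<cdot> d \<and> X = X \<cdot> a \<cdot> d"
    have "X = (X \<cdot> a) \<cdot> d" using h by simp
    also have "\<dots> = g \<cdot> a \<cdot> d \<cdot> a \<cdot> d" using h by simp
    also have "\<dots> = g \<cdot> a \<cdot> d" by (simp add: assoc dad)
    finally show "X = g \<cdot> a \<cdot> d" .
  qed
  show ?thesis using b cc dd ee unfolding A_def by blast
qed

end


lemma mode3_mode3: "mode3 N1 (mode3 N2 C) = mode3 (N1 ** N2) C"
proof -
  have "(\<Sum>l\<in>UNIV. (\<Sum>p\<in>UNIV. N1$k$p * N2$p$l) * C$l$i$j) = (\<Sum>p\<in>UNIV. N1$k$p * (\<Sum>l\<in>UNIV. N2$p$l * C$l$i$j))" for k i j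
  proof -
    have "(\<Sum>l\<in>UNIV. (\<Sum>p\<in>UNIV. N1$k$p * N2$p$l) * C$l$i$j) = (\<Sum>l\<in>UNIV. \<Sum>p\<in>UNIV. N1$k$p * N2$p$l * C$l$i$j)"
      by (simp add: sum_distrib_right)
    also have "\<dots> = (\<Sum>p\<in>UNIV. \<Sum>l\<in>UNIV. N1$k$p * N2$p$l * C$l$i$j)" by (rule sum.swap)
    also have "\<dots> = (\<Sum>p\<in>UNIV. N1$k$p * (\<Sum>l\<in>UNIV. N2$p$l * C$l$i$j))" by (simp add: sum_distrib_left mult.assoc)
    finally show ?thesis .
  qed
  then show ?thesis unfolding mode3_def matrix_matrix_mult_def by (simp add: vec_eq_iff)
qed

lemma mode3_id: "mode3 (mat 1) C = C"
proof -
  have "(\<Sum>l\<in>UNIV. mat 1 $ i $ l * C $ l $ a $ b) = C $ i $ a $ b" for i a b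
  proof -
    have "(\<Sum>l\<in>UNIV. mat 1 $ i $ l * C $ l $ a $ b) = (\<Sum>l\<in>UNIV. if i = l then C $ l $ a $ b else 0)"
      by (rule sum.cong) (auto simp: mat_def)
    then show ?thesis by simp
  qed
  then show ?thesis unfolding mode3_def by (simp add: vec_eq_iff)
qed

lemma minv: assumes "invertible M" shows "M ** matrix_inv M = mat 1" "matrix_inv M ** M = mat 1"
  using assms unfolding invertible_def matrix_inv_def by (metis (mono_tags, lifting) someI_ex)+

lemma phi_psi: "invertible M \<Longrightarrow> mode3 M (mode3 (matrix_inv M) C) = C"
  by (simp add: mode3_mode3 minv mode3_id)
lemma psi_phi: "invertible M \<Longrightarrow> mode3 (matrix_inv M) (mode3 M C) = C"
  by (simp add: mode3_mode3 minv mode3_id)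

lemma phi_inj: "invertible M \<Longrightarrow> mode3 M C = mode3 M D \<Longrightarrow> C = D"
  by (metis psi_phi)

lemma phi_mprod: "invertible M \<Longrightarrow> mode3 M (mprod M C D) $ k = mode3 M C $ k ** mode3 M D $ k"
  by (simp add: mprod_def phi_psi)

lemma phi_tid: "invertible M \<Longrightarrow> mode3 M (tid M) $ k = mat 1"
  by (simp add: tid_def phi_psi)

lemma mprod_assoc: "invertible M \<Longrightarrow> mprod M (mprod M A B) C = mprod M A (mprod M B C)"
  by (rule phi_inj, assumption) (simp add: vec_eq_iff[of "mode3 M _"] phi_mprod matrix_mul_assoc)



lemma inj_on_sub:
  fixes A :: "'a::field^'n^'n"
  assumes V: "vec.subspace V" and img: "(*v) A ` V = V"
  shows "inj_on ((*v) A) V"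
proof -
  obtain Bs where Bs: "Bs \<subseteq> V" "vec.independent Bs" "V \<subseteq> vec.span Bs" "card Bs = vec.dim V"
    by (rule vec.basis_exists)
  have fin: "finite Bs" using Bs(2) by (rule vec.finiteI_independent)
  have spanB: "vec.span Bs = V" using Bs V vec.span_minimal by blast
  have sp: "V \<subseteq> vec.span ((*v) A ` Bs)" using vec.span_image[of A Bs] spanB img by simp
  have c1: "vec.dim V \<le> card ((*v) A ` Bs)" by (rule vec.dim_le_card[OF sp]) (simp add: fin)
  have c2: "card ((*v) A ` Bs) \<le> card Bs" by (rule card_image_le[OF fin])
  have sub: "(*v) A ` Bs \<subseteq> V" using Bs(1) img by blast
  have ind: "vec.independent ((*v) A ` Bs)"
    by (rule vec.card_le_dim_spanning[OF sub sp]) (use fin c1 c2 Bs(4) in auto)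
  have injB: "inj_on ((*v) A) Bs" using c1 c2 Bs(4) fin by (simp add: inj_on_iff_eq_card)
  show ?thesis using vec.inj_on_span_independent_image[OF ind injB] spanB by simp
qed

lemma column_eq: "column i A = A *v axis i (1::'a::comm_semiring_1)"
  by (simp add: column_def matrix_vector_mult_def axis_def vec_eq_iff if_distrib sum.delta' cong: if_cong)

lemma span_columns_range:
  fixes A :: "'a::field^'n^'m"
  shows "vec.span (columns A) = range ((*v) A)"
proof
  show "vec.span (columns A) \<subseteq> range ((*v) A)"
  proof (rule vec.span_minimal)
    show "columns A \<subseteq> range ((*v) A)" by (auto simp: columns_def column_eq)
    show "vec.subspace (range ((*v) A))" using vec.subspace_image[OF vec.subspace_UNIV] by simp
  qed
  show "range ((*v) A) \<subseteq> vec.span (columns A)" using matrix_vector_mult_in_columnspace_gen by blast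
qed

lemma rank_range: "rank (C::'a::field^'n^'m) = vec.dim (range ((*v) (transpose C)))"
  unfolding row_rank_def_gen
  by (metis columns_transpose span_columns_range vec.dim_span)

lemma mpow_0: "mpow B 0 = mat 1" by (simp add: mpow_def)
lemma mpow_Suc: "mpow B (Suc j) = mpow B j ** B" by (simp add: mpow_def)
lemma mpow_Suc': "mpow B (Suc j) = B ** mpow B j"
  by (induct j) (simp_all add: mpow_Suc mpow_0, metis matrix_mul_assoc)

definition VV :: "complex^'n^'n \<Rightarrow> nat \<Rightarrow> (complex^'n) set" where
  "VV B j = range ((*v) (transpose (mpow B j)))"

lemma VV_subspace: "vec.subspace (VV B j)"
  unfolding VV_def by (rule vec.subspace_image[OF vec.subspace_UNIV])

lemma VV_rank: "rank (mpow B j) = vec.dim (VV B j)"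
  by (simp add: VV_def rank_range)

lemma VV_Suc_img: "VV B (Suc j) = (*v) (transpose B) ` VV B j"
  by (auto simp: VV_def mpow_Suc matrix_transpose_mul matrix_vector_mul_assoc[symmetric] image_iff)

lemma VV_Suc_sub: "VV B (Suc j) \<subseteq> VV B j"
  by (auto simp: VV_def mpow_Suc' matrix_transpose_mul matrix_vector_mul_assoc[symmetric])

lemma rank_mono: fixes B :: "complex^'n^'n" shows "rank (mpow B (Suc j)) \<le> rank (mpow B j)"
  unfolding VV_rank by (rule vec.dim_subset[OF VV_Suc_sub])

lemma VV_eq: "rank (mpow B (Suc j)) = rank (mpow B j) \<Longrightarrow> VV B (Suc j) = VV B j"
  unfolding VV_rank by (rule vec.subspace_dim_equal[OF VV_subspace VV_subspace VV_Suc_sub]) simp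

lemma VV_stable:
  assumes "VV B (Suc i) = VV B i" shows "VV B (Suc (i + n)) = VV B (i + n)"
proof (induct n)
  case 0 then show ?case using assms by simp
next
  case (Suc n)
  have "VV B (Suc (i + Suc n)) = (*v) (transpose B) ` VV B (Suc (i + n))" by (simp add: VV_Suc_img)
  also have "\<dots> = (*v) (transpose B) ` VV B (i + n)" using Suc by simp
  also have "\<dots> = VV B (i + Suc n)" by (simp add: VV_Suc_img)
  finally show ?case .
qed

lemma mat_index_ex: fixes B :: "complex^'n^'n" shows "\<exists>j. rank (mpow B (j + 1)) = rank (mpow B j)"
proof (rule ccontr)
  assume "\<not> ?thesis"
  then have lt: "rank (mpow B (Suc j)) < rank (mpow B j)" for j using rank_mono[of B j] by (metis Suc_eq_plus1 le_neq_implies_less)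
  have "rank (mpow B j) + j \<le> rank (mpow B 0)" for j
  proof (induct j)
    case (Suc j) then show ?case using lt[of j] by simp
  qed simp
  from this[of "Suc (rank (mpow B 0))"] show False by simp
qed

lemma mat_index_prop: "rank (mpow B (mat_index B + 1)) = rank (mpow B (mat_index B))"
  unfolding mat_index_def using mat_index_ex[of B] by (rule LeastI_ex)

lemma VV_k: assumes "mat_index B \<le> k" shows "VV B (Suc k) = VV B k"
proof -
  have "VV B (Suc (mat_index B)) = VV B (mat_index B)" by (rule VV_eq) (metis mat_index_prop Suc_eq_plus1)
  from VV_stable[OF this, of "k - mat_index B"] assms show ?thesis by simp
qed

lemma drazin_ingredients:
  fixes B :: "complex^'n^'n"
  assumes "mat_index B \<le> k"
  shows "\<exists>X. mpow B (Suc k) ** X = mpow B k" "\<exists>Y. Y ** mpow B (Suc k) = mpow B k"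
proof -
  define G where "G j = transpose (mpow B j)" for j
  have V: "VV B (Suc k) = VV B k" using VV_k[OF assms] .
  have Vd: "VV B j = range ((*v) (G j))" for j by (simp add: VV_def G_def)
  obtain h where h: "Vector_Spaces.linear (*s) (*s) h" "\<forall>v\<in>range ((*v) (G (Suc k))). G (Suc k) *v h v = v"
    using vec.linear_exists_right_inverse_on[OF matrix_vector_mul_linear_gen vec.subspace_UNIV, of "G (Suc k)"]
    by auto
  have GS: "G (Suc k) = transpose B ** G k" by (simp add: G_def mpow_Suc matrix_transpose_mul)
  define Z where "Z = matrix (h \<circ> (*v) (G k))"
  have linZ: "Vector_Spaces.linear (*s) (*s) (h \<circ> (*v) (G k))"
    by (rule Vector_Spaces.linear_compose[OF matrix_vector_mul_linear_gen h(1)])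
  have "G (Suc k) ** Z = G k"
  proof (rule iffD2[OF matrix_eq], rule allI)
    fix x
    have "G k *v x \<in> range ((*v) (G (Suc k)))" using V Vd by blast
    then obtain y where y: "G k *v x = G (Suc k) *v y" by blast
    have eq: "G (Suc k) *v h (G k *v x) = G k *v x" using h(2) y by auto
    show "G (Suc k) ** Z *v x = G k *v x"
      by (simp add: Z_def matrix_vector_mul_assoc[symmetric] matrix_works[OF linZ] eq)
  qed
  then have "transpose Z ** mpow B (Suc k) = mpow B k"
    by (metis G_def matrix_transpose_mul transpose_transpose)
  then show "\<exists>Y. Y ** mpow B (Suc k) = mpow B k" by blast
  have injT: "inj_on ((*v) (transpose B)) (VV B k)"
    by (rule inj_on_sub[OF VV_subspace]) (metis V VV_Suc_img)
  have ker: "G k *v y = 0" if "G (Suc k) *v y = 0" for y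
  proof -
    have "transpose B *v (G k *v y) = transpose B *v 0"
      using that by (simp add: GS matrix_vector_mul_assoc)
    moreover have "G k *v y \<in> VV B k" "(0::complex^'n) \<in> VV B k" unfolding Vd
      by (auto, metis matrix_vector_mult_0_right rangeI)
    ultimately show ?thesis using injT by (meson inj_onD)
  qed
  define S where "S = (*v) (G k) \<circ> h"
  have linS: "Vector_Spaces.linear (*s) (*s) S"
    unfolding S_def by (rule Vector_Spaces.linear_compose[OF h(1) matrix_vector_mul_linear_gen])
  have "matrix S ** G (Suc k) = G k"
  proof (rule iffD2[OF matrix_eq], rule allI)
    fix x
    have "G (Suc k) *v h (G (Suc k) *v x) = G (Suc k) *v x" using h(2) by blast
    then have "G (Suc k) *v (h (G (Suc k) *v x) - x) = 0" by (simp add: matrix_vector_mult_diff_distrib)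
    then have "G k *v (h (G (Suc k) *v x) - x) = 0" by (rule ker)
    then show "matrix S ** G (Suc k) *v x = G k *v x"
      by (simp add: S_def matrix_vector_mul_assoc[symmetric] matrix_works[OF linS[unfolded S_def]] matrix_vector_mult_diff_distrib)
  qed
  then have "mpow B (Suc k) ** transpose (matrix S) = mpow B k"
    by (metis G_def matrix_transpose_mul transpose_transpose)
  then show "\<exists>X. mpow B (Suc k) ** X = mpow B k" by blast
qed

lemma tid_lr: assumes "invertible M" shows "mprod M (tid M) a = a" "mprod M a (tid M) = a"
  by (rule phi_inj[OF assms], simp add: vec_eq_iff[of "mode3 M _"] phi_mprod phi_tid assms)+

lemma tpow_slice: "invertible M \<Longrightarrow> mode3 M (tpow M A j) $ i = mpow (mode3 M A $ i) j"
  by (induct j) (simp_all add: phi_tid mpow_0 phi_mprod mpow_Suc)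

lemma tind_ge: "mat_index (mode3 M A $ i) \<le> tind M A"
  unfolding tind_def by (rule Max_ge) auto

theorem theorem3p7:
  fixes M :: "complex ^ 'm::finite ^ 'm"
    and A Am X :: "('n::finite, 'm) tensor"
    and k :: nat
  assumes "invertible M"
    and "tind M A = k"
    and "Am \<in> one_inverses M A"
  defines "P \<equiv> mprod M" and "AD \<equiv> drazin M A" and "Ak \<equiv> tpow M A k"
  shows "(X = one_D_inverse M A Am
           \<longleftrightarrow> P (P X A) X = X \<and> P X Ak = P Am Ak \<and> P (P A X) A = P (P A AD) A \<and> P A X = P A AD)
       \<and> (X = one_D_inverse M A Am
           \<longleftrightarrow> P (P Am A) X = X \<and> P X Ak = P Am Ak \<and> X = P (P X A) AD)
       \<and> (X = one_D_inverse M A Am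
           \<longleftrightarrow> P (P (P (P Am A) X) A) AD = X \<and> P (P A X) Ak = Ak)
       \<and> (X = one_D_inverse M A Am
           \<longleftrightarrow> P (P (P Am A) AD) A = P X A \<and> P Ak X = P Ak AD \<and> X = P (P X A) AD)"
proof -
  note inv = assms(1)
  interpret T: amon "mprod M" "tid M"
    by unfold_locales (simp_all add: mprod_assoc inv tid_lr)
  have pw_eq: "T.pw a j = tpow M a j" for a j
    by (induct j) (simp_all add: T.pw.simps(2))
  let ?B = "\<lambda>i. mode3 M A $ i"
  have le: "mat_index (?B i) \<le> k" for i using tind_ge[of M A i] assms(2) by simp
  have "\<forall>i. \<exists>Xi. mpow (?B i) (Suc k) ** Xi = mpow (?B i) k" using drazin_ingredients(1)[OF le] by blast
  then obtain fx where fx: "\<And>i. mpow (?B i) (Suc k) ** fx i = mpow (?B i) k" by metis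
  have "\<forall>i. \<exists>Yi. Yi ** mpow (?B i) (Suc k) = mpow (?B i) k" using drazin_ingredients(2)[OF le] by blast
  then obtain fy where fy: "\<And>i. fy i ** mpow (?B i) (Suc k) = mpow (?B i) k" by metis
  define Xt where "Xt = mode3 (matrix_inv M) (\<chi> i. fx i)"
  define Yt where "Yt = mode3 (matrix_inv M) (\<chi> i. fy i)"
  have Xt: "mprod M (tpow M A (Suc k)) Xt = tpow M A k"
    by (rule phi_inj[OF inv]) (simp add: vec_eq_iff[of "mode3 M _"] phi_mprod inv tpow_slice Xt_def phi_psi fx fx[unfolded mpow_Suc])
  have Yt: "mprod M Yt (tpow M A (Suc k)) = tpow M A k"
    by (rule phi_inj[OF inv]) (simp add: vec_eq_iff[of "mode3 M _"] phi_mprod inv tpow_slice Yt_def phi_psi fy fy[unfolded mpow_Suc])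
  have ex: "T.isD A k (mprod M (T.pw A k) (T.pw Xt (Suc k)))"
    by (rule T.isD_exists[where y=Yt]) (simp_all only: pw_eq Xt Yt)
  have iD: "T.isD A k (drazin M A)"
  proof -
    have "\<exists>!W. T.isD A k W" using ex T.isD_unique by blast
    then have "T.isD A k (THE W. T.isD A k W)" by (rule theI')
    moreover have "(THE W. T.isD A k W) = drazin M A"
      unfolding drazin_def assms(2) T.isD_def pw_eq by simp
    ultimately show ?thesis by simp
  qed
  have gi: "mprod M (mprod M A Am) A = A" using assms(3) by (simp add: one_inverses_def)
  show ?thesis
    using T.main_alg[OF iD gi, of X]
    unfolding P_def AD_def Ak_def one_D_inverse_def pw_eq .
qed

end
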